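(* For every $n\geq 2$, the ladder graph $L_n$ satisfies $\mathcal{R}(L_n)=2$. Consequently, every ladder graph $L_n$ ($n\geq 1$) is a circle graph.
   Context: All graphs are finite and simple. For a word $w$ and distinct letters $x,y$ occurring in $w$, $x$ and $y$ alternate in $w$ if deleting all letters other than copies of $x$ and $y$ yields a word of the form $xyxy\cdots$ or $yxyx\cdots$ (of even or odd length). A graph $G=(V,E)$ is word-representable if there is a word $w$ over $V$ (each vertex occurring in $w$) such that for all distinct $x,y\in V$, $x$ and $y$ alternate in $w$ iff $(x,y)\in E$. A word is $k$-uniform if each letter occurs exactly $k$ times; $G$ is $k$-word-representable if some $k$-uniform word represents it; the representation number $\mathcal{R}(G)$ is the least such $k$. The ladder graph $L_n$ has vertices $1,\ldots,n,1',\ldots,n'$ and the $3n-2$ edges $(i,i+1)$ and $(i',(i+1)')$ for $1\leq i\leq n-1$ and $(i,i')$ for $1\leq i\leq n$. A circle graph is a graph whose vertices can be associated with chords of a circle so that two vertices are adjacent iff their chords cross. *)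

theory Defs
  imports "HOL-Analysis.Analysis"
begin

text \<open>A graph is given by a finite vertex set V and an adjacency predicate adj
  (only its values on distinct vertices of V matter).\<close>

definition alternate :: "'a list \<Rightarrow> 'a \<Rightarrow> 'a \<Rightarrow> bool" where
  "alternate w x y \<longleftrightarrow>
     (\<exists>m. filter (\<lambda>z. z = x \<or> z = y) w = map (\<lambda>i. if even i then x else y) [0..<m]
        \<or> filter (\<lambda>z. z = x \<or> z = y) w = map (\<lambda>i. if even i then y else x) [0..<m])"

definition word_represents :: "'a set \<Rightarrow> ('a \<Rightarrow> 'a \<Rightarrow> bool) \<Rightarrow> 'a list \<Rightarrow> bool" where
  "word_represents V adj w \<longleftrightarrow> set w = V \<and>
     (\<forall>x\<in>V. \<forall>y\<in>V. x \<noteq> y \<longrightarrow> (alternate w x y \<longleftrightarrow> adj x y))"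

definition uniform_word :: "nat \<Rightarrow> 'a list \<Rightarrow> bool" where
  "uniform_word k w \<longleftrightarrow> (\<forall>x\<in>set w. count_list w x = k)"

definition k_word_representable :: "'a set \<Rightarrow> ('a \<Rightarrow> 'a \<Rightarrow> bool) \<Rightarrow> nat \<Rightarrow> bool" where
  "k_word_representable V adj k \<longleftrightarrow> (\<exists>w. uniform_word k w \<and> word_represents V adj w)"

definition rep_number :: "'a set \<Rightarrow> ('a \<Rightarrow> 'a \<Rightarrow> bool) \<Rightarrow> nat" where
  "rep_number V adj = (LEAST k. k_word_representable V adj k)"

text \<open>Ladder graph: vertex (i,False) is i, vertex (i,True) is i'.\<close>

definition ladder_V :: "nat \<Rightarrow> (nat \<times> bool) set" where
  "ladder_V n = {(i, b). 1 \<le> i \<and> i \<le> n}"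

definition ladder_adj :: "nat \<Rightarrow> nat \<times> bool \<Rightarrow> nat \<times> bool \<Rightarrow> bool" where
  "ladder_adj n u v \<longleftrightarrow> u \<in> ladder_V n \<and> v \<in> ladder_V n \<and>
     ((snd u = snd v \<and> (fst v = fst u + 1 \<or> fst u = fst v + 1)) \<or>
      (fst u = fst v \<and> snd u \<noteq> snd v))"

definition circle_graph :: "'a set \<Rightarrow> ('a \<Rightarrow> 'a \<Rightarrow> bool) \<Rightarrow> bool" where
  "circle_graph V adj \<longleftrightarrow> (\<exists>p q :: 'a \<Rightarrow> complex.
     (\<forall>v\<in>V. cmod (p v) = 1 \<and> cmod (q v) = 1 \<and> p v \<noteq> q v) \<and>
     (\<forall>u\<in>V. \<forall>v\<in>V. u \<noteq> v \<longrightarrow> {p u, q u} \<inter> {p v, q v} = {}) \<and>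
     (\<forall>u\<in>V. \<forall>v\<in>V. u \<noteq> v \<longrightarrow>
        (adj u v \<longleftrightarrow> closed_segment (p u) (q u) \<inter> closed_segment (p v) (q v) \<noteq> {})))"

end

theory Submission
  imports Defs
begin

definition sg :: "nat \<times> bool \<Rightarrow> int" where
  "sg v = (if snd v = odd (fst v) then 2 * int (fst v) else 2 * int (fst v) - 3)"
definition kb :: "nat \<times> bool \<Rightarrow> int" where
  "kb v = (if snd v = odd (fst v) then 3 - 2 * int (fst v) else - 2 * int (fst v))"
definition dec1 :: "int \<Rightarrow> nat \<times> bool" where
  "dec1 k = (if even k then (nat (k div 2), odd (nat (k div 2)))
             else (nat ((k+3) div 2), even (nat ((k+3) div 2))))"
definition dec2 :: "int \<Rightarrow> nat \<times> bool" where
  "dec2 k = (if even (-k) then (nat ((-k) div 2), even (nat ((-k) div 2)))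
             else (nat ((-k+3) div 2), odd (nat ((-k+3) div 2))))"

lemma dec1_iff: "1 \<le> fst v \<Longrightarrow> dec1 k = v \<longleftrightarrow> k = sg v"
proof -
  assume a: "1 \<le> fst v"
  obtain i b where v: "v = (i, b)" by (cases v)
  show ?thesis using a unfolding v dec1_def sg_def
    by (auto split: if_splits simp: even_nat_iff)
qed

lemma dec2_iff: "1 \<le> fst v \<Longrightarrow> dec2 k = v \<longleftrightarrow> k = kb v"
proof -
  assume a: "1 \<le> fst v"
  obtain i b where v: "v = (i, b)" by (cases v)
  show ?thesis using a unfolding v dec2_def kb_def
    by (auto split: if_splits simp: even_nat_iff)
qed

lemma adj_iff:
  assumes "u \<in> ladder_V n" "v \<in> ladder_V n" "u \<noteq> v"
  shows "ladder_adj n u v \<longleftrightarrow> (sg u < sg v \<longleftrightarrow> kb u < kb v)"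
proof -
  obtain i b where u: "u = (i, b)" by (cases u)
  obtain j c where v: "v = (j, c)" by (cases v)
  show ?thesis using assms unfolding u v ladder_adj_def ladder_V_def sg_def kb_def
    by (auto split: if_splits) presburger+
qed

lemma filt2:
  fixes a b lo hi :: int
  assumes "lo \<le> a" "a \<le> hi" "lo \<le> b" "b \<le> hi"
  shows "filter (\<lambda>k. k = a \<or> k = b) [lo..hi] =
    (if a < b then [a,b] else if b < a then [b,a] else [a])"
proof -
  let ?l = "filter (\<lambda>k. k = a \<or> k = b) [lo..hi]"
  have s: "sorted ?l" by (simp add: sorted_wrt_filter)
  have d: "distinct ?l" by simp
  have st: "set ?l = {a, b}" using assms by auto
  consider "a < b" | "b < a" | "a = b" by linarith
  then show ?thesis
  proof cases
    case 1
    then show ?thesis using sorted_distinct_set_unique[OF s d, of "[a,b]"] st by auto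
  next
    case 2
    then show ?thesis using sorted_distinct_set_unique[OF s d, of "[b,a]"] st by auto
  next
    case 3
    then show ?thesis using sorted_distinct_set_unique[OF s d, of "[a]"] st by auto
  qed
qed

definition V1 :: "nat \<Rightarrow> int list" where
  "V1 n = filter (\<lambda>k. dec1 k \<in> ladder_V n) [-1..2 * int n]"
definition V2 :: "nat \<Rightarrow> int list" where
  "V2 n = filter (\<lambda>k. dec2 k \<in> ladder_V n) [-2 * int n..1]"
definition lw :: "nat \<Rightarrow> (nat \<times> bool) list" where
  "lw n = map dec1 (V1 n) @ map dec2 (V2 n)"

lemma sg_range: "v \<in> ladder_V n \<Longrightarrow> -1 \<le> sg v \<and> sg v \<le> 2 * int n"
  by (auto simp: ladder_V_def sg_def)
lemma kb_range: "v \<in> ladder_V n \<Longrightarrow> -2 * int n \<le> kb v \<and> kb v \<le> 1"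
  by (auto simp: ladder_V_def kb_def)
lemma V_fst: "v \<in> ladder_V n \<Longrightarrow> 1 \<le> fst v"
  by (auto simp: ladder_V_def)

lemma half1:
  assumes "x \<in> ladder_V n" "y \<in> ladder_V n"
  shows "filter (\<lambda>z. z = x \<or> z = y) (map dec1 (V1 n)) =
    (if sg x < sg y then [x,y] else if sg y < sg x then [y,x] else [x])"
proof -
  have ex: "dec1 (sg x) = x" "dec1 (sg y) = y"
    using dec1_iff[OF V_fst[OF assms(1)], of "sg x"] dec1_iff[OF V_fst[OF assms(2)], of "sg y"] by auto
  have key: "(dec1 k \<in> ladder_V n \<and> (dec1 k = x \<or> dec1 k = y)) = (k = sg x \<or> k = sg y)" for k
    using assms ex dec1_iff[OF V_fst[OF assms(1)], of k] dec1_iff[OF V_fst[OF assms(2)], of k] by auto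
  have "filter (\<lambda>z. z = x \<or> z = y) (map dec1 (V1 n)) =
     map dec1 (filter (\<lambda>k. k = sg x \<or> k = sg y) [-1..2 * int n])"
    unfolding V1_def filter_map filter_filter o_def
    by (rule arg_cong[where f="map dec1"], rule filter_cong)
       (simp_all add: key)
  also have "\<dots> = (if sg x < sg y then [x,y] else if sg y < sg x then [y,x] else [x])"
    using sg_range[OF assms(1)] sg_range[OF assms(2)]
      dec1_iff[OF V_fst[OF assms(1)], of "sg x"] dec1_iff[OF V_fst[OF assms(2)], of "sg y"]
    by (simp add: filt2, metis)
  finally show ?thesis .
qed

lemma half2:
  assumes "x \<in> ladder_V n" "y \<in> ladder_V n"
  shows "filter (\<lambda>z. z = x \<or> z = y) (map dec2 (V2 n)) =
    (if kb x < kb y then [x,y] else if kb y < kb x then [y,x] else [x])"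
proof -
  have ex: "dec2 (kb x) = x" "dec2 (kb y) = y"
    using dec2_iff[OF V_fst[OF assms(1)], of "kb x"] dec2_iff[OF V_fst[OF assms(2)], of "kb y"] by auto
  have key: "(dec2 k \<in> ladder_V n \<and> (dec2 k = x \<or> dec2 k = y)) = (k = kb x \<or> k = kb y)" for k
    using assms ex dec2_iff[OF V_fst[OF assms(1)], of k] dec2_iff[OF V_fst[OF assms(2)], of k] by auto
  have "filter (\<lambda>z. z = x \<or> z = y) (map dec2 (V2 n)) =
     map dec2 (filter (\<lambda>k. k = kb x \<or> k = kb y) [-2 * int n..1])"
    unfolding V2_def filter_map filter_filter o_def
    by (rule arg_cong[where f="map dec2"], rule filter_cong)
       (simp_all add: key)
  also have "\<dots> = (if kb x < kb y then [x,y] else if kb y < kb x then [y,x] else [x])"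
    using kb_range[OF assms(1)] kb_range[OF assms(2)]
      dec2_iff[OF V_fst[OF assms(1)], of "kb x"] dec2_iff[OF V_fst[OF assms(2)], of "kb y"]
    by (simp add: filt2, metis)
  finally show ?thesis .
qed

lemma lw_set: "set (lw n) = ladder_V n"
proof
  show "set (lw n) \<subseteq> ladder_V n" by (auto simp: lw_def V1_def V2_def)
  show "ladder_V n \<subseteq> set (lw n)"
  proof
    fix v assume v: "v \<in> ladder_V n"
    have "sg v \<in> set (V1 n)" using sg_range[OF v] dec1_iff[OF V_fst[OF v], of "sg v"] v
      by (simp add: V1_def)
    moreover have "dec1 (sg v) = v" using dec1_iff[OF V_fst[OF v]] by simp
    ultimately show "v \<in> set (lw n)" unfolding lw_def by force
  qed
qed

lemma lw_count: "x \<in> ladder_V n \<Longrightarrow> count_list (lw n) x = 2"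
proof -
  assume x: "x \<in> ladder_V n"
  have "count_list (lw n) x = length (filter (\<lambda>z. z = x \<or> z = x) (lw n))"
    unfolding count_list_eq_length_filter by (metis)
  also have "\<dots> = 2" unfolding lw_def using half1[OF x x] half2[OF x x] by simp
  finally show ?thesis .
qed

lemma sg_inj: "x \<in> ladder_V n \<Longrightarrow> y \<in> ladder_V n \<Longrightarrow> sg x = sg y \<Longrightarrow> x = y"
  using dec1_iff V_fst by metis
lemma kb_inj: "x \<in> ladder_V n \<Longrightarrow> y \<in> ladder_V n \<Longrightarrow> kb x = kb y \<Longrightarrow> x = y"
  using dec2_iff V_fst by metis

lemma alt4: "map (\<lambda>i. if even i then x else y) [0..<4] = [x,y,x,y]"
  by (simp add: upt_rec)


lemma lw_alt:
  assumes "x \<in> ladder_V n" "y \<in> ladder_V n" "x \<noteq> y"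
  shows "alternate (lw n) x y \<longleftrightarrow> (sg x < sg y \<longleftrightarrow> kb x < kb y)"
proof -
  have ns: "sg x \<noteq> sg y" "kb x \<noteq> kb y" using sg_inj kb_inj assms by blast+
  have F: "filter (\<lambda>z. z = x \<or> z = y) (lw n) =
     (if sg x < sg y then [x,y] else [y,x]) @ (if kb x < kb y then [x,y] else [y,x])"
    unfolding lw_def using half1[OF assms(1,2)] half2[OF assms(1,2)] ns by auto
  have noalt1: "[a,b,b,a] \<noteq> map (\<lambda>i. if even i then p else q) [0..<m]"
    if "a \<noteq> b" for a b p q m
  proof (cases "m = 4")
    case True then show ?thesis using that by (auto simp: upt_rec)
  next
    case False
    then have "length [a,b,b,a] \<noteq> length (map (\<lambda>i. if even i then p else q) [0..<m])" by simp
    then show ?thesis by metis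
  qed
  have noalt: "\<not> (\<exists>m. [a,b,b,a] = map (\<lambda>i. if even i then x else y) [0..<m]
        \<or> [a,b,b,a] = map (\<lambda>i. if even i then y else x) [0..<m])"
    if "a \<noteq> b" for a b
    using noalt1[OF that, of x y] noalt1[OF that, of y x] by auto
  show ?thesis
  proof (cases "sg x < sg y \<longleftrightarrow> kb x < kb y")
    case True
    then have "filter (\<lambda>z. z = x \<or> z = y) (lw n) = map (\<lambda>i. if even i then x else y) [0..<4]
      \<or> filter (\<lambda>z. z = x \<or> z = y) (lw n) = map (\<lambda>i. if even i then y else x) [0..<4]"
      using F by (simp add: upt_rec)
    then show ?thesis using True unfolding alternate_def by blast
  next
    case False
    then have "\<exists>a b. a \<noteq> b \<and> filter (\<lambda>z. z = x \<or> z = y) (lw n) = [a,b,b,a]"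
    proof (cases "sg x < sg y")
      case True
      then show ?thesis using F False assms(3) by (intro exI[of _ x] exI[of _ y]) simp
    next
      case c: False
      then show ?thesis using F False assms(3) by (intro exI[of _ y] exI[of _ x]) simp
    qed
    then obtain a b where ab: "a \<noteq> b" "filter (\<lambda>z. z = x \<or> z = y) (lw n) = [a,b,b,a]" by blast
    show ?thesis unfolding alternate_def ab(2) using noalt[OF ab(1)] False by simp
  qed
qed


definition ori :: "complex \<Rightarrow> complex \<Rightarrow> complex \<Rightarrow> real" where
  "ori A B C = Re (B - A) * Im (C - A) - Im (B - A) * Re (C - A)"

definition P :: "real \<Rightarrow> complex" where
  "P t = Complex ((1 - t^2) / (1 + t^2)) (2 * t / (1 + t^2))"

lemma ori_lin: "ori A B ((1 - v) *\<^sub>R C + v *\<^sub>R D) = (1 - v) * ori A B C + v * ori A B D"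
  unfolding ori_def by (simp add: algebra_simps)

lemma ori_seg0: "ori A B ((1 - v) *\<^sub>R A + v *\<^sub>R B) = 0"
  unfolding ori_def by (simp add: algebra_simps)

lemma seg_disjoint:
  assumes "(0 < ori A B C \<and> 0 < ori A B D) \<or> (ori A B C < 0 \<and> ori A B D < 0)"
  shows "closed_segment A B \<inter> closed_segment C D = {}"
proof (rule ccontr)
  assume "closed_segment A B \<inter> closed_segment C D \<noteq> {}"
  then obtain X where X1: "X \<in> closed_segment A B" and X2: "X \<in> closed_segment C D" by blast
  from X1 obtain u where "X = (1 - u) *\<^sub>R A + u *\<^sub>R B" by (auto simp: in_segment)
  then have 0: "ori A B X = 0" using ori_seg0 by simp
  from X2 obtain v where v: "0 \<le> v" "v \<le> 1" "X = (1 - v) *\<^sub>R C + v *\<^sub>R D" by (auto simp: in_segment)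
  then have "ori A B X = (1 - v) * ori A B C + v * ori A B D" using ori_lin by simp
  moreover have "(1 - v) * ori A B C + v * ori A B D \<noteq> 0"
  proof -
    consider "0 < ori A B C \<and> 0 < ori A B D" | "ori A B C < 0 \<and> ori A B D < 0" using assms by blast
    then show ?thesis
    proof cases
      case 1
      then have "0 < (1 - v) * ori A B C + v * ori A B D"
        using v by (smt (verit) mult_nonneg_nonneg mult_pos_pos)
      then show ?thesis by simp
    next
      case 2
      then have "(1 - v) * ori A B C + v * ori A B D < 0"
        using v by (smt (verit) mult_nonneg_nonpos mult_pos_neg)
      then show ?thesis by simp
    qed
  qed
  ultimately show False using 0 by simp
qed

lemma seg_cross:
  assumes "ori A B C < 0" "0 < ori A B D" "ori C D B < 0" "0 < ori C D A"
  shows "closed_segment A B \<inter> closed_segment C D \<noteq> {}"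
proof -
  define oC where "oC = ori A B C"
  define oD where "oD = ori A B D"
  define pA where "pA = ori C D A"
  define pB where "pB = ori C D B"
  define l where "l = oC / (oC - oD)"
  define m where "m = pA / (pA - pB)"
  have l: "0 \<le> l" "l \<le> 1" using assms unfolding l_def oC_def oD_def by (auto simp: divide_simps)
  have m: "0 \<le> m" "m \<le> 1" using assms unfolding m_def pA_def pB_def by (auto simp: divide_simps)
  have ne1: "oC - oD \<noteq> 0" "pA - pB \<noteq> 0" using assms unfolding oC_def oD_def pA_def pB_def by auto
  have eq: "(1 - l) *\<^sub>R C + l *\<^sub>R D = (1 - m) *\<^sub>R A + m *\<^sub>R B"
  proof (rule complex_eqI)
    show "Re ((1 - l) *\<^sub>R C + l *\<^sub>R D) = Re ((1 - m) *\<^sub>R A + m *\<^sub>R B)"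
      using ne1 unfolding l_def m_def oC_def oD_def pA_def pB_def ori_def
      by (simp add: field_simps)
    show "Im ((1 - l) *\<^sub>R C + l *\<^sub>R D) = Im ((1 - m) *\<^sub>R A + m *\<^sub>R B)"
      using ne1 unfolding l_def m_def oC_def oD_def pA_def pB_def ori_def
      by (simp add: field_simps)
  qed
  have "(1 - l) *\<^sub>R C + l *\<^sub>R D \<in> closed_segment C D" using l by (auto simp: in_segment)
  moreover have "(1 - m) *\<^sub>R A + m *\<^sub>R B \<in> closed_segment A B" using m by (auto simp: in_segment)
  ultimately show ?thesis using eq by auto
qed

lemma ori_P: "ori (P r) (P s) (P u) = 4*(s-r)*(u-s)*(u-r)/((1+r^2)*(1+s^2)*(1+u^2))"
proof -
  have "1 + r^2 > 0" "1+s^2>0" "1+u^2>0" by (auto simp: add_pos_nonneg)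
  then show ?thesis unfolding ori_def P_def by (simp add: divide_simps) algebra
qed



lemma cmod_P: "cmod (P t) = 1"
proof -
  have pos: "1 + t^2 > 0" by (simp add: add_pos_nonneg)
  have "(cmod (P t))^2 = 1"
    unfolding cmod_power2 P_def using pos by (simp add: field_simps) algebra
  then show ?thesis using norm_ge_zero[of "P t"] power2_eq_1_iff[of "cmod (P t)"] by auto
qed

lemma P_inj: assumes "P a = P b" shows "a = b"
proof -
  have pa: "1 + a^2 > 0" and pb: "1 + b^2 > 0" by (simp_all add: add_pos_nonneg)
  have "Re (P a) = Re (P b)" "Im (P a) = Im (P b)" using assms by simp_all
  then have e1: "(1 - a^2) * (1 + b^2) = (1 - b^2) * (1 + a^2)"
    and e2: "a * (1 + b^2) = b * (1 + a^2)"
    unfolding P_def using pa pb by (simp_all add: field_simps)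
  from e1 have "a^2 = b^2" by (simp add: algebra_simps)
  with e2 have "a * (1 + a^2) = b * (1 + a^2)" by simp
  then show ?thesis using pa by simp
qed

lemma ori_P_pos: "ori (P r) (P s) (P u) > 0 \<longleftrightarrow> (s-r)*(u-s)*(u-r) > 0"
proof -
  have "(1+r^2)*(1+s^2)*(1+u^2) > 0" by (simp add: add_pos_nonneg)
  then show ?thesis unfolding ori_P by (auto simp: zero_less_divide_iff zero_less_mult_iff mult_less_0_iff)
qed

lemma ori_P_neg: "ori (P r) (P s) (P u) < 0 \<longleftrightarrow> (s-r)*(u-s)*(u-r) < 0"
proof -
  have "(1+r^2)*(1+s^2)*(1+u^2) > 0" by (simp add: add_pos_nonneg)
  then show ?thesis unfolding ori_P by (auto simp: divide_less_0_iff zero_less_mult_iff mult_less_0_iff)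
qed

lemma P_cross:
  fixes a b c d :: real
  assumes "a < c" "c < b" "b < d"
  shows "closed_segment (P a) (P b) \<inter> closed_segment (P c) (P d) \<noteq> {}"
proof (rule seg_cross)
  have "(b-a)*(c-b)*(c-a) < 0" using assms by (auto simp: zero_less_mult_iff mult_less_0_iff)
  then show "ori (P a) (P b) (P c) < 0" by (simp add: ori_P_neg)
  have "(b-a)*(d-b)*(d-a) > 0" using assms by (auto simp: zero_less_mult_iff mult_less_0_iff)
  then show "0 < ori (P a) (P b) (P d)" by (simp add: ori_P_pos)
  have "(d-c)*(b-d)*(b-c) < 0" using assms by (auto simp: zero_less_mult_iff mult_less_0_iff)
  then show "ori (P c) (P d) (P b) < 0" by (simp add: ori_P_neg)
  have "(d-c)*(a-d)*(a-c) > 0" using assms by (auto simp: zero_less_mult_iff mult_less_0_iff)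
  then show "0 < ori (P c) (P d) (P a)" by (simp add: ori_P_pos)
qed

lemma P_nest:
  fixes a b c d :: real
  assumes "a < c" "c < d" "d < b"
  shows "closed_segment (P a) (P b) \<inter> closed_segment (P c) (P d) = {}"
proof (rule seg_disjoint, rule disjI2, rule conjI)
  have "(b-a)*(c-b)*(c-a) < 0" using assms by (auto simp: zero_less_mult_iff mult_less_0_iff)
  then show "ori (P a) (P b) (P c) < 0" by (simp add: ori_P_neg)
  have "(b-a)*(d-b)*(d-a) < 0" using assms by (auto simp: zero_less_mult_iff mult_less_0_iff)
  then show "ori (P a) (P b) (P d) < 0" by (simp add: ori_P_neg)
qed

lemma GL:
  fixes a b c d :: real
  assumes "a < b" "c < d" "a < d" "c < b" "a \<noteq> c" "b \<noteq> d"
  shows "closed_segment (P a) (P b) \<inter> closed_segment (P c) (P d) \<noteq> {} \<longleftrightarrow> (a < c \<longleftrightarrow> b < d)"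
proof (cases "a < c")
  case True
  show ?thesis
  proof (cases "b < d")
    case True
    then show ?thesis using P_cross[of a c b d] \<open>a < c\<close> assms by auto
  next
    case False
    then have "d < b" using assms by auto
    then show ?thesis using P_nest[of a c d b] \<open>a < c\<close> assms by auto
  qed
next
  case False
  then have ca: "c < a" using assms by auto
  show ?thesis
  proof (cases "b < d")
    case True
    then show ?thesis using P_nest[of c a b d] ca assms by (auto simp: Int_commute)
  next
    case False
    then have "d < b" using assms by auto
    then show ?thesis using P_cross[of c a d b] ca assms by (auto simp: Int_commute)
  qed
qed

lemma ladder_circle: "circle_graph (ladder_V n) (ladder_adj n)"
  unfolding circle_graph_def
proof (intro exI conjI ballI impI)
  define pp where "pp v = real_of_int (sg v) + 2" for v
  define qq where "qq v = real_of_int (kb v) + 4 * real n + 4" for v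
  have pq: "pp u < qq v" if "u \<in> ladder_V n" "v \<in> ladder_V n" for u v
    using sg_range[OF that(1)] kb_range[OF that(2)] unfolding pp_def qq_def by linarith
  fix v assume v: "v \<in> ladder_V n"
  show "cmod (P (pp v)) = 1" "cmod (P (qq v)) = 1" by (simp_all add: cmod_P)
  show "P (pp v) \<noteq> P (qq v)" using pq[OF v v] P_inj by force
next
  define pp where "pp v = real_of_int (sg v) + 2" for v
  define qq where "qq v = real_of_int (kb v) + 4 * real n + 4" for v
  have pq: "pp u < qq v" if "u \<in> ladder_V n" "v \<in> ladder_V n" for u v
    using sg_range[OF that(1)] kb_range[OF that(2)] unfolding pp_def qq_def by linarith
  fix u v assume u: "u \<in> ladder_V n" and v: "v \<in> ladder_V n" and uv: "u \<noteq> v"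
  have d1: "pp u \<noteq> pp v" using sg_inj[OF u v] uv unfolding pp_def by auto
  have d2: "qq u \<noteq> qq v" using kb_inj[OF u v] uv unfolding qq_def by auto
  have "P (pp u) \<noteq> P (pp v)" "P (pp u) \<noteq> P (qq v)" "P (qq u) \<noteq> P (pp v)" "P (qq u) \<noteq> P (qq v)"
    using d1 d2 pq[OF u v] pq[OF v u] P_inj by (metis less_irrefl)+
  then show "{P (pp u), P (qq u)} \<inter> {P (pp v), P (qq v)} = {}" by auto
next
  define pp where "pp v = real_of_int (sg v) + 2" for v
  define qq where "qq v = real_of_int (kb v) + 4 * real n + 4" for v
  have pq: "pp u < qq v" if "u \<in> ladder_V n" "v \<in> ladder_V n" for u v
    using sg_range[OF that(1)] kb_range[OF that(2)] unfolding pp_def qq_def by linarith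
  fix u v assume u: "u \<in> ladder_V n" and v: "v \<in> ladder_V n" and uv: "u \<noteq> v"
  have d1: "pp u \<noteq> pp v" using sg_inj[OF u v] uv unfolding pp_def by auto
  have d2: "qq u \<noteq> qq v" using kb_inj[OF u v] uv unfolding qq_def by auto
  have "closed_segment (P (pp u)) (P (qq u)) \<inter> closed_segment (P (pp v)) (P (qq v)) \<noteq> {}
     \<longleftrightarrow> (pp u < pp v \<longleftrightarrow> qq u < qq v)"
    by (rule GL) (use d1 d2 pq[OF u v] pq[OF v u] pq[OF u u] pq[OF v v] in auto)
  also have "\<dots> \<longleftrightarrow> (sg u < sg v \<longleftrightarrow> kb u < kb v)" unfolding pp_def qq_def by simp
  also have "\<dots> \<longleftrightarrow> ladder_adj n u v" using adj_iff[OF u v uv] by simp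
  finally show "ladder_adj n u v \<longleftrightarrow>
     closed_segment (P (pp u)) (P (qq u)) \<inter> closed_segment (P (pp v)) (P (qq v)) \<noteq> {}" by simp
qed

lemma len_filter2: "x \<noteq> y \<Longrightarrow> length (filter (\<lambda>z. z = x \<or> z = y) w) = count_list w x + count_list w y"
  by (induction w) auto

lemma not_rep:
  assumes n: "n \<ge> 2" and k: "k_word_representable (ladder_V n) (ladder_adj n) k"
  shows "2 \<le> k"
proof (rule ccontr)
  assume "\<not> 2 \<le> k"
  then have k01: "k = 0 \<or> k = 1" by auto
  from k obtain w where u: "uniform_word k w" and r: "word_represents (ladder_V n) (ladder_adj n) w"
    unfolding k_word_representable_def by blast
  define x where "x = (1::nat, False)"
  define y where "y = (2::nat, True)"
  have xV: "x \<in> ladder_V n" "y \<in> ladder_V n" using n by (auto simp: x_def y_def ladder_V_def)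
  have sw: "set w = ladder_V n" using r by (simp add: word_represents_def)
  have cx: "count_list w x = k" "count_list w y = k" using u xV sw by (auto simp: uniform_word_def)
  have "count_list w x \<noteq> 0" using xV sw by (simp add: count_list_0_iff)
  then have k1: "k = 1" using k01 cx by auto
  have xy: "x \<noteq> y" by (simp add: x_def y_def)
  let ?l = "filter (\<lambda>z. z = x \<or> z = y) w"
  have len: "length ?l = 2" using len_filter2[OF xy, of w] cx k1 by simp
  have xin: "x \<in> set ?l" "y \<in> set ?l" using xV sw by auto
  have sub: "set ?l \<subseteq> {x, y}" by auto
  obtain a b where ab: "?l = [a, b]" using len
    by (metis (no_types, lifting) One_nat_def Suc_1 length_0_conv length_Suc_conv)
  have "?l = [x, y] \<or> ?l = [y, x]" using ab xin sub xy by auto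
  then have "alternate w x y" unfolding alternate_def
    by (intro exI[of _ 2]) (auto simp: upt_rec)
  moreover have "\<not> ladder_adj n x y" by (simp add: ladder_adj_def x_def y_def)
  ultimately show False using r xV xy unfolding word_represents_def by blast
qed

lemma rep2: "n \<ge> 2 \<Longrightarrow> k_word_representable (ladder_V n) (ladder_adj n) 2"
  unfolding k_word_representable_def
proof (intro exI conjI)
  show "uniform_word 2 (lw n)" unfolding uniform_word_def using lw_set lw_count by auto
  show "word_represents (ladder_V n) (ladder_adj n) (lw n)"
    unfolding word_represents_def using lw_set lw_alt adj_iff by auto
qed

theorem theorem19:
  shows "(\<forall>n\<ge>2. k_word_representable (ladder_V n) (ladder_adj n) 2 \<and>
                 rep_number (ladder_V n) (ladder_adj n) = 2) \<and>
         (\<forall>n\<ge>1. circle_graph (ladder_V n) (ladder_adj n))"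
proof (intro conjI allI impI)
  fix n :: nat assume n: "n \<ge> 2"
  show "k_word_representable (ladder_V n) (ladder_adj n) 2" using rep2[OF n] .
  show "rep_number (ladder_V n) (ladder_adj n) = 2" unfolding rep_number_def
    by (rule Least_equality) (use rep2[OF n] not_rep[OF n] in auto)
next
  fix n :: nat assume "n \<ge> 1"
  show "circle_graph (ladder_V n) (ladder_adj n)" by (rule ladder_circle)
qed

end
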